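(* Assume $a>1$. Let $f:\mathbb R\to\mathbb R$ be defined by $f(z)=\mu z+\lambda\ln\Big[\dfrac{\lambda(e^{\frac{a}{\lambda}(1-z)}-1)}{1-z}\Big]$ for $z\neq1$ and $f(1)=\mu+\lambda\ln a$. Then: (1) $f(z)=\mu z+\lambda\ln w(z)$ for all $z\in\mathbb R$, where $w(z)=a+\sum_{n=2}^\infty \frac{a^n(1-z)^{n-1}}{n!\,\lambda^{n-1}}$; in particular $f\in C^\infty(\mathbb R)$. (2) $f$ is convex, and the graph of $f$ intersects the graph of $k(x)=\mu x$ at exactly one point, whose abscissa $H$ satisfies $H\in(1,1+\lambda)$.
   Context: Constants $\mu\in\mathbb R$, $a>0$, $\lambda>0$ are fixed. *)

theory Defs
  imports "HOL-Analysis.Analysis"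
begin

definition f_prop :: "real \<Rightarrow> real \<Rightarrow> real \<Rightarrow> real \<Rightarrow> real" where
  "f_prop mu a lam z =
     (if z = 1 then mu + lam * ln a
      else mu * z + lam * ln (lam * (exp ((a / lam) * (1 - z)) - 1) / (1 - z)))"

text \<open>The n-th term (n >= 2) of the series defining w, reindexed from 0: term m corresponds to n = m + 2.\<close>
definition w_term :: "real \<Rightarrow> real \<Rightarrow> real \<Rightarrow> nat \<Rightarrow> real" where
  "w_term a lam z m =
     a ^ (m + 2) * (1 - z) ^ (m + 1) / (fact (m + 2) * lam ^ (m + 1))"

definition w_prop :: "real \<Rightarrow> real \<Rightarrow> real \<Rightarrow> real" where
  "w_prop a lam z = a + (\<Sum>m. w_term a lam z m)"

definition C_infinity :: "(real \<Rightarrow> real) \<Rightarrow> bool" where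
  "C_infinity g \<longleftrightarrow> (\<forall>n x. ((deriv ^^ n) g) differentiable (at x))"

end

theory Submission
  imports Defs "HOL-Complex_Analysis.Complex_Analysis"
begin


definition cc :: "nat \<Rightarrow> 'a::real_normed_field" where
  "cc n = inverse (fact (Suc n))"

definition gser :: "'a::{real_normed_field,banach} \<Rightarrow> 'a" where
  "gser x = (\<Sum>n. cc n * x^n)"

lemma summable_cc: "summable (\<lambda>n. cc n * (x::'a::{real_normed_field,banach})^n)"
proof (rule summable_norm_cancel, rule summable_comparison_test[OF _ summable_exp[of "norm x"]])
  show "\<exists>N. \<forall>n\<ge>N. norm (norm (cc n * x ^ n)) \<le> inverse (fact n) * norm x ^ n"
  proof (intro exI allI impI)
    fix n :: nat
    have "norm (cc n * x ^ n) = inverse (fact (Suc n)) * norm x ^ n"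
      by (simp add: cc_def norm_mult norm_power norm_inverse norm_fact del: fact_Suc)
    also have "\<dots> \<le> inverse (fact n) * norm x ^ n"
      by (intro mult_right_mono) (auto simp: fact_mono divide_simps)
    finally show "norm (norm (cc n * x ^ n)) \<le> inverse (fact n) * norm x ^ n" by simp
  qed
qed

lemma exp_series_eq: "exp x = (\<Sum>n. inverse (fact n) * (x::'a::{real_normed_field,banach})^n)"
  using exp_converges[of x] by (simp add: sums_iff scaleR_conv_of_real nonzero_of_real_inverse)

lemma gser_ode: "x * gser x = exp x - (1::'a::{real_normed_field,banach})"
proof -
  have "x * gser x = (\<Sum>n. x * (cc n * x^n))"
    unfolding gser_def by (rule suminf_mult[OF summable_cc, symmetric])
  also have "\<dots> = (\<Sum>n. inverse (fact (Suc n)) * x^(Suc n))"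
    by (simp add: cc_def mult_ac)
  also have "\<dots> = exp x - 1"
    using suminf_split_head[OF summable_exp[of x]] exp_series_eq[of x] by simp
  finally show ?thesis .
qed

lemma gser_deriv: "(gser has_field_derivative (\<Sum>n. diffs cc n * x^n)) (at (x::'a::{real_normed_field,banach}))"
  unfolding gser_def[abs_def] by (rule termdiffs_strong_converges_everywhere[OF summable_cc])

lemma gser_of_real: "gser (of_real x :: 'a::{real_normed_field,banach}) = of_real (gser x)"
  unfolding gser_def
  by (subst suminf_of_real[OF summable_cc]) (simp add: cc_def of_real_inverse)



definition g1 :: "real \<Rightarrow> real" where "g1 x = (\<Sum>n. diffs cc n * x^n)"
definition g2 :: "real \<Rightarrow> real" where "g2 x = (\<Sum>n. diffs (diffs cc) n * x^n)"
definition g3 :: "real \<Rightarrow> real" where "g3 x = (\<Sum>n. diffs (diffs (diffs cc)) n * x^n)"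

lemma s1: "summable (\<lambda>n. diffs cc n * (x::real)^n)"
  by (rule termdiff_converges_all[OF summable_cc])
lemma s2: "summable (\<lambda>n. diffs (diffs cc) n * (x::real)^n)"
  by (rule termdiff_converges_all[OF s1])

lemma d0: "(gser has_real_derivative g1 x) (at x)"
  unfolding g1_def by (rule gser_deriv)
lemma d1: "(g1 has_real_derivative g2 x) (at x)"
  unfolding g1_def[abs_def] g2_def by (rule termdiffs_strong_converges_everywhere[OF s1])
lemma d2: "(g2 has_real_derivative g3 x) (at x)"
  unfolding g3_def g2_def[abs_def] by (rule termdiffs_strong_converges_everywhere[OF s2])

lemma ode0: "x * gser x = exp x - 1" for x :: real
  by (rule gser_ode)

lemma ode1: "gser x + x * g1 x = exp x" for x :: real
proof -
  have "((\<lambda>x. x * gser x) has_real_derivative (x * g1 x + 1 * gser x)) (at x)"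
    by (rule DERIV_mult'[OF DERIV_ident d0])
  moreover have "((\<lambda>x. x * gser x) has_real_derivative exp x) (at x)"
    unfolding ode0 by (auto intro!: derivative_eq_intros)
  ultimately show ?thesis using DERIV_unique by fastforce
qed

lemma ode2: "2 * g1 x + x * g2 x = exp x" for x :: real
proof -
  have "((\<lambda>x. gser x + x * g1 x) has_real_derivative (g1 x + (x * g2 x + 1 * g1 x))) (at x)"
    by (rule DERIV_add[OF d0 DERIV_mult'[OF DERIV_ident d1]])
  moreover have "((\<lambda>x. gser x + x * g1 x) has_real_derivative exp x) (at x)"
    unfolding ode1 by (auto intro!: derivative_eq_intros)
  ultimately show ?thesis using DERIV_unique by fastforce
qed

lemma ode3: "3 * g2 x + x * g3 x = exp x" for x :: real
proof -
  have "((\<lambda>x. 2 * g1 x + x * g2 x) has_real_derivative (2 * g2 x + (x * g3 x + 1 * g2 x))) (at x)"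
    by (rule DERIV_add[OF DERIV_cmult[OF d1] DERIV_mult'[OF DERIV_ident d2]])
  moreover have "((\<lambda>x. 2 * g1 x + x * g2 x) has_real_derivative exp x) (at x)"
    unfolding ode2 by (auto intro!: derivative_eq_intros)
  ultimately show ?thesis using DERIV_unique by fastforce
qed

lemma gser0: "gser (0::real) = 1" using ode1[of 0] by simp
lemma g10: "g1 0 = 1/2" using ode2[of 0] by simp
lemma g20: "g2 0 = 1/3" using ode3[of 0] by simp

lemma gser_ne: "x \<noteq> 0 \<Longrightarrow> gser x = (exp x - 1) / x" for x :: real
  using ode0[of x] by (simp add: field_simps)

lemma gser_pos: "gser x > 0" for x :: real
proof (cases "x = 0")
  case True thus ?thesis by (simp add: gser0)
next
  case False
  then show ?thesis unfolding gser_ne[OF False]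
    by (cases "x > 0") (auto simp: divide_pos_pos divide_neg_neg)
qed

lemma g1_pos: "x \<noteq> 0 \<Longrightarrow> g1 x > 0" for x :: real
proof -
  assume x: "x \<noteq> 0"
  have e: "1 - x < exp (-x)" using exp_minus_greater x by simp
  have "exp x * (1 - x) < exp x * exp (-x)" using e by simp
  hence num: "x * exp x - exp x + 1 > 0" by (simp add: exp_minus algebra_simps)
  have "g1 x = (x * exp x - exp x + 1) / x^2"
    using ode1[of x] gser_ne[OF x] x by (simp add: field_simps power2_eq_square)
  thus ?thesis using num x by simp
qed

lemma sinh_ineq: "(exp t - exp (-t) - 2*t) * t \<ge> 0" for t :: real
proof -
  define phi where "phi t = exp t - exp (-t) - 2*t" for t :: real
  have der: "\<exists>y. DERIV phi x :> y \<and> y \<ge> 0" for x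
  proof (intro exI conjI)
    show "DERIV phi x :> exp x + exp (-x) - 2"
      unfolding phi_def[abs_def] by (auto intro!: derivative_eq_intros)
    have "(exp x - 1)^2 / exp x \<ge> 0" by simp
    moreover have "(exp x - 1)^2 / exp x = exp x + exp (-x) - 2"
      by (simp add: exp_minus field_simps power2_eq_square)
    ultimately show "exp x + exp (-x) - 2 \<ge> 0" by simp
  qed
  have p0: "phi 0 = 0" by (simp add: phi_def)
  show ?thesis
  proof (cases "t \<ge> 0")
    case True
    have "phi 0 \<le> phi t" by (rule DERIV_nonneg_imp_nondecreasing[OF True der])
    thus ?thesis using True p0 unfolding phi_def by simp
  next
    case False
    have "phi t \<le> phi 0" by (rule DERIV_nonneg_imp_nondecreasing) (use False der in auto)
    thus ?thesis using False p0 unfolding phi_def by (simp add: mult_nonpos_nonpos)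
  qed
qed

lemma key_ineq: "(exp x - 1)^2 \<ge> x^2 * exp x" for x :: real
proof -
  define t where "t = x / 2"
  define s where "s = exp t"
  have s: "s > 0" by (simp add: s_def)
  have E: "exp x = s^2" by (simp add: s_def t_def power2_eq_square flip: exp_add)
  define A where "A = s - 1/s"
  have At: "(A - 2*t) * t \<ge> 0" using sinh_ineq[of t] by (simp add: A_def s_def exp_minus inverse_eq_divide)
  have A2: "A^2 \<ge> (2*t)^2"
  proof (cases "t \<ge> 0")
    case True
    have "A \<ge> 2*t"
    proof (cases "t = 0")
      case False
      with True have "t > 0" by simp
      with At show ?thesis by (simp add: zero_le_mult_iff)
    next
      case True
      have "A \<ge> 0" using s unfolding A_def True s_def by (simp add: field_simps)
      thus ?thesis using True by simp
    qed
    then show ?thesis using True by (intro power_mono) auto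
  next
    case False
    then have "A - 2*t \<le> 0" using At by (simp add: zero_le_mult_iff)
    then have "-A \<ge> -(2*t)" "-(2*t) \<ge> 0" using False by auto
    then have "(-(2*t))^2 \<le> (-A)^2" by (intro power_mono) auto
    then show ?thesis by simp
  qed
  have sA: "s * A = s^2 - 1" using s by (simp add: A_def field_simps power2_eq_square)
  have "(exp x - 1)^2 - x^2 * exp x = (s * A)^2 - (2*t)^2 * s^2"
    unfolding E sA t_def by simp
  also have "\<dots> = s^2 * (A^2 - (2*t)^2)" by (simp add: power_mult_distrib algebra_simps)
  finally have "(exp x - 1)^2 - x^2 * exp x = s^2 * (A^2 - (2*t)^2)" .
  moreover have "s^2 * (A^2 - (2*t)^2) \<ge> 0" using A2 by simp
  ultimately show ?thesis by simp
qed

lemma logconv: "gser x * g2 x - (g1 x)^2 \<ge> 0" for x :: real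
proof (cases "x = 0")
  case True thus ?thesis by (simp add: gser0 g10 g20 power2_eq_square)
next
  case False
  define E where "E = exp x"
  have P: "x * gser x = E - 1" using ode0[of x] by (simp add: E_def)
  have Q: "x^2 * g1 x = x * E - (E - 1)"
  proof -
    have "x * (gser x + x * g1 x) = x * E" using ode1[of x] by (simp add: E_def)
    thus ?thesis using P by (simp add: algebra_simps power2_eq_square)
  qed
  have R: "x^3 * g2 x = x^2 * E - 2 * (x * E - (E - 1))"
  proof -
    have "x^2 * (2 * g1 x + x * g2 x) = x^2 * E" using ode2[of x] by (simp add: E_def)
    hence "2 * (x^2 * g1 x) + x^3 * g2 x = x^2 * E" by (simp add: algebra_simps power2_eq_square power3_eq_cube)
    thus ?thesis using Q by simp
  qed
  have "x^4 * (gser x * g2 x - (g1 x)^2) = (x * gser x) * (x^3 * g2 x) - (x^2 * g1 x)^2"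
    by (simp add: algebra_simps power2_eq_square power3_eq_cube power4_eq_xxxx)
  also have "\<dots> = (E - 1) * (x^2 * E - 2 * (x * E - (E - 1))) - (x * E - (E - 1))^2"
    unfolding P Q R ..
  also have "\<dots> = (E - 1)^2 - x^2 * E"
    by (simp add: algebra_simps power2_eq_square)
  finally have eq: "x^4 * (gser x * g2 x - (g1 x)^2) = (E - 1)^2 - x^2 * E" .
  have "x^4 * (gser x * g2 x - (g1 x)^2) \<ge> 0" unfolding eq E_def using key_ineq[of x] by simp
  moreover have "x^4 > 0" using False by simp
  ultimately show ?thesis by (simp add: zero_le_mult_iff)
qed

lemma ratio_mono: "x \<le> y \<Longrightarrow> g1 x / gser x \<le> g1 y / gser y" for x y :: real
proof -
  assume "x \<le> y"
  show ?thesis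
  proof (rule DERIV_nonneg_imp_nondecreasing[OF \<open>x \<le> y\<close>])
    fix z :: real
    have "DERIV (\<lambda>z. g1 z / gser z) z :> (g2 z * gser z - g1 z * g1 z) / (gser z * gser z)"
      using gser_pos[of z] by (intro DERIV_divide d1 d0) auto
    moreover have "(g2 z * gser z - g1 z * g1 z) / (gser z * gser z) \<ge> 0"
      using logconv[of z] by (simp add: power2_eq_square mult.commute)
    ultimately show "\<exists>y. DERIV (\<lambda>z. g1 z / gser z) z :> y \<and> y \<ge> 0" by blast
  qed
qed

lemma gser_strict: "x < y \<Longrightarrow> y \<le> 0 \<Longrightarrow> gser x < gser y" for x y :: real
  apply (rule DERIV_pos_imp_increasing, assumption)
  subgoal for z
    using d0[of z] g1_pos[of z] by (cases "z = 0") (auto simp: g10 intro!: exI[of _ "g1 z"])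
  done



lemma hol_step:
  assumes S: "open S" and G: "G holomorphic_on S" and R: "\<And>x. complex_of_real x \<in> S"
    and GR: "\<And>x. G (of_real x) = of_real (h x)"
  shows "(h has_real_derivative Re (deriv G (of_real x))) (at x)
         \<and> deriv G (of_real x) = of_real (Re (deriv G (of_real x)))"
proof -
  define D where "D = deriv G (of_real x)"
  have "(G has_field_derivative D) (at (of_real x))"
    unfolding D_def by (rule holomorphic_derivI[OF G S R])
  hence "((\<lambda>t. G (of_real t)) has_vector_derivative D) (at x)"
    by (rule has_vector_derivative_real_field)
  hence V: "((\<lambda>t. complex_of_real (h t)) has_vector_derivative D) (at x)"
    by (simp add: GR)
  have 1: "(h has_real_derivative Re D) (at x)"
    using has_field_derivative_Re[OF V] by simp
  have "((\<lambda>t. 0::real) has_real_derivative Im D) (at x)"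
    using has_field_derivative_Im[OF V] by simp
  hence "Im D = 0" using DERIV_const DERIV_unique by blast
  hence "D = of_real (Re D)" by (simp add: complex_eq_iff)
  thus ?thesis using 1 unfolding D_def by simp
qed

lemma hol_smooth:
  assumes S: "open S" and F: "F holomorphic_on S" and R: "\<And>x. complex_of_real x \<in> S"
    and FR: "\<And>x. F (of_real x) = of_real (h x)"
  shows "C_infinity h"
proof -
  have P: "(deriv ^^ n) F (of_real x) = of_real ((deriv ^^ n) h x)" for n x
  proof (induction n arbitrary: x)
    case 0 thus ?case using FR by simp
  next
    case (Suc n)
    have st: "((deriv ^^ n) h has_real_derivative Re (deriv ((deriv ^^ n) F) (of_real x))) (at x)
         \<and> deriv ((deriv ^^ n) F) (of_real x) = of_real (Re (deriv ((deriv ^^ n) F) (of_real x)))"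
      by (rule hol_step[OF S holomorphic_higher_deriv[OF F S] R Suc.IH])
    hence "deriv ((deriv ^^ n) h) x = Re (deriv ((deriv ^^ n) F) (of_real x))"
      using DERIV_imp_deriv by blast
    thus ?case using st by simp
  qed
  show ?thesis unfolding C_infinity_def
  proof (intro allI)
    fix n x
    have "((deriv ^^ n) h has_real_derivative Re (deriv ((deriv ^^ n) F) (of_real x))) (at x)"
      using hol_step[OF S holomorphic_higher_deriv[OF F S] R P] by blast
    thus "(deriv ^^ n) h differentiable at x" by (auto simp: real_differentiable_def)
  qed
qed

lemma gser_holo: "(gser :: complex \<Rightarrow> complex) holomorphic_on UNIV"
  using gser_deriv by (auto simp: holomorphic_on_open)

lemma gser_holo': "f holomorphic_on A \<Longrightarrow> (\<lambda>z. gser (f z) :: complex) holomorphic_on A"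
  using holomorphic_on_compose_gen[OF _ gser_holo, of f A] by (auto simp: o_def)



lemma w_facts:
  fixes a lam z :: real
  assumes "lam > 0"
  shows "summable (w_term a lam z) \<and> w_prop a lam z = a * gser ((a/lam) * (1 - z))"
proof -
  define u where "u = (a/lam) * (1 - z)"
  have wt: "w_term a lam z = (\<lambda>m. a * (cc (Suc m) * u ^ Suc m))"
  proof
    fix m
    have e1: "u ^ Suc m = a ^ Suc m * (1 - z) ^ Suc m / lam ^ Suc m"
      by (simp only: u_def power_mult_distrib power_divide) simp
    have e2: "a ^ (m + 2) = a * a ^ Suc m" by simp
    have e3: "fact (m + 2) = (fact (Suc (Suc m)) :: real)" by (simp del: fact_Suc)
    show "w_term a lam z m = a * (cc (Suc m) * u ^ Suc m)"
      unfolding w_term_def e1 e2 e3 cc_def using assms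
      by (simp add: field_simps del: fact_Suc)
  qed
  have sm: "summable (\<lambda>m. cc (Suc m) * u ^ Suc m)"
    using summable_cc[of u] by (subst summable_Suc_iff)
  have "(\<Sum>m. a * (cc (Suc m) * u ^ Suc m)) = a * (\<Sum>m. cc (Suc m) * u ^ Suc m)"
    by (rule suminf_mult[OF sm])
  also have "\<dots> = a * (gser u - 1)"
    using suminf_split_head[OF summable_cc[of u]] by (simp add: gser_def cc_def)
  finally show ?thesis
    unfolding w_prop_def wt u_def[symmetric] using summable_mult[OF sm, of a]
    by (simp add: algebra_simps)
qed

lemma f_eq:
  fixes a lam z mu :: real
  assumes "lam > 0" "a > 0"
  shows "f_prop mu a lam z = mu * z + lam * ln (a * gser ((a/lam) * (1 - z)))"
proof (cases "z = 1")
  case True thus ?thesis by (simp add: f_prop_def gser0)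
next
  case False
  define u where "u = (a/lam) * (1 - z)"
  have u: "u \<noteq> 0" using False assms by (simp add: u_def)
  have "lam * (exp u - 1) / (1 - z) = a * gser u"
    unfolding gser_ne[OF u] using False assms by (simp add: u_def field_simps)
  thus ?thesis using False unfolding f_prop_def u_def by simp
qed


lemma gser_root:
  fixes a :: real assumes a: "a > 1"
  shows "(\<exists>!v. gser v = 1/a) \<and> (\<forall>v. gser v = 1/a \<longrightarrow> -a < v \<and> v < 0)"
proof -
  have ga: "gser (-a) < 1/a"
  proof -
    have "gser (-a) = (1 - exp (-a)) / a" using a by (simp add: gser_ne field_simps)
    also have "\<dots> < 1/a" using a by (simp add: divide_strict_right_mono)
    finally show ?thesis .
  qed
  have pos: "gser v \<ge> 1" if "v \<ge> 0" for v :: real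
  proof (cases "v = 0")
    case True thus ?thesis by (simp add: gser0)
  next
    case False
    with that have v: "v > 0" by simp
    have "1 + v < exp v" using exp_minus_greater[of "-v"] v by simp
    thus ?thesis using v by (simp add: gser_ne field_simps)
  qed
  have rng: "-a < v \<and> v < 0" if "gser v = 1/a" for v
  proof -
    have "\<not> v \<ge> 0" using pos[of v] that a by (auto simp: field_simps)
    hence v0: "v < 0" by simp
    have "\<not> v \<le> -a"
    proof
      assume "v \<le> -a"
      hence "gser v \<le> gser (-a)" using gser_strict[of v "-a"] a by (cases "v = -a") auto
      thus False using ga that by simp
    qed
    thus ?thesis using v0 by simp
  qed
  have ex: "\<exists>v. gser v = 1/a"
  proof -
    have "continuous_on {-a..0} gser"
      by (rule continuous_at_imp_continuous_on) (auto intro: DERIV_isCont[OF d0])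
    moreover have "gser (-a) \<le> 1/a" using ga by simp
    moreover have "1/a \<le> gser 0" using a by (simp add: gser0)
    ultimately show ?thesis using IVT'[of gser "-a" "1/a" 0] a by auto
  qed
  have un: "v1 = v2" if "gser v1 = 1/a" "gser v2 = 1/a" for v1 v2
  proof (rule ccontr)
    assume "v1 \<noteq> v2"
    then consider "v1 < v2" | "v2 < v1" by linarith
    thus False
    proof cases
      case 1 thus False using gser_strict[of v1 v2] rng[OF that(2)] that by simp
    next
      case 2 thus False using gser_strict[of v2 v1] rng[OF that(1)] that by simp
    qed
  qed
  show ?thesis using ex un rng by blast
qed



theorem proposition3p1:
  fixes mu a lam :: real
  assumes "a > 1" and "lam > 0"
  shows "(\<forall>z. summable (w_term a lam z) \<and>
              f_prop mu a lam z = mu * z + lam * ln (w_prop a lam z))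
       \<and> C_infinity (f_prop mu a lam)
       \<and> convex_on UNIV (f_prop mu a lam)
       \<and> (\<exists>!H. f_prop mu a lam H = mu * H)
       \<and> (\<forall>H. f_prop mu a lam H = mu * H \<longrightarrow> 1 < H \<and> H < 1 + lam)"
proof -
  have a0: "a > 0" using assms by simp
  define c where "c = a / lam"
  have c0: "c > 0" using a0 assms by (simp add: c_def)
  have feq: "f_prop mu a lam = (\<lambda>z. mu * z + lam * ln (a * gser (c * (1 - z))))"
    using f_eq[OF assms(2) a0] by (auto simp: c_def)
  have P1: "\<forall>z. summable (w_term a lam z) \<and>
              f_prop mu a lam z = mu * z + lam * ln (w_prop a lam z)"
    using w_facts[OF assms(2)] f_eq[OF assms(2) a0] by simp
  have agpos: "a * gser v > 0" for v using a0 gser_pos[of v] by simp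
  define W where "W s = of_real a * gser (of_real c * (1 - s))" for s :: complex
  define S where "S = W -` {z. 0 < Re z}"
  define F where "F s = of_real mu * s + of_real lam * Ln (W s)" for s
  have WH: "W holomorphic_on UNIV"
    unfolding W_def by (intro holomorphic_intros gser_holo')
  have Wr: "W (of_real x) = of_real (a * gser (c * (1 - x)))" for x
    unfolding W_def by (simp flip: gser_of_real)
  have oS: "open S"
    unfolding S_def
  proof (rule continuous_open_vimage)
    show "open {z. 0 < Re z}" by (rule open_halfspace_Re_gt)
    show "continuous (at x) W" for x
      using holomorphic_on_imp_continuous_on[OF WH] by (simp add: continuous_on_eq_continuous_at)
  qed
  have FH: "F holomorphic_on S"
    unfolding F_def
  proof (intro holomorphic_intros)
    show "W holomorphic_on S" using WH by (rule holomorphic_on_subset) simp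
    show "W z \<notin> \<real>\<^sub>\<le>\<^sub>0" if "z \<in> S" for z
      using that by (auto simp: S_def complex_nonpos_Reals_iff)
  qed
  have RS: "complex_of_real x \<in> S" for x
    unfolding S_def using agpos by (simp add: Wr)
  have FR: "F (of_real x) = of_real (f_prop mu a lam x)" for x
    unfolding F_def Wr feq Ln_of_real[OF agpos] by simp
  have P2: "C_infinity (f_prop mu a lam)" by (rule hol_smooth[OF oS FH RS FR])
  have P3: "convex_on UNIV (f_prop mu a lam)"
  proof (rule convex_on_realI[where f' = "\<lambda>z. mu - a * (g1 (c * (1 - z)) / gser (c * (1 - z)))"])
    show "connected (UNIV :: real set)" by simp
    fix z :: real
    have dg: "((\<lambda>z. gser (c * (1 - z))) has_real_derivative g1 (c * (1 - z)) * (- c)) (at z)"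
      by (rule DERIV_chain2[OF d0]) (auto intro!: derivative_eq_intros)
    have dl: "((\<lambda>z. ln (a * gser (c * (1 - z)))) has_real_derivative
           (1 / (a * gser (c * (1 - z)))) * (a * (g1 (c * (1 - z)) * (- c)))) (at z)"
      by (rule DERIV_chain2[OF DERIV_ln_divide[OF agpos] DERIV_cmult[OF dg]])
    have "((\<lambda>z. mu * z + lam * ln (a * gser (c * (1 - z)))) has_real_derivative
           mu * 1 + lam * ((1 / (a * gser (c * (1 - z)))) * (a * (g1 (c * (1 - z)) * (- c))))) (at z)"
      by (rule DERIV_add[OF DERIV_cmult[OF DERIV_ident] DERIV_cmult[OF dl]])
    moreover have "mu * 1 + lam * ((1 / (a * gser (c * (1 - z)))) * (a * (g1 (c * (1 - z)) * (- c))))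
       = mu - a * (g1 (c * (1 - z)) / gser (c * (1 - z)))"
      using assms a0 gser_pos[of "c * (1 - z)"] by (simp add: c_def field_simps)
    ultimately show "(f_prop mu a lam has_real_derivative mu - a * (g1 (c * (1 - z)) / gser (c * (1 - z)))) (at z)"
      unfolding feq by simp
  next
    fix x y :: real
    assume "x \<le> y"
    hence "c * (1 - y) \<le> c * (1 - x)" using c0 by simp
    hence "g1 (c * (1 - y)) / gser (c * (1 - y)) \<le> g1 (c * (1 - x)) / gser (c * (1 - x))"
      by (rule ratio_mono)
    hence "a * (g1 (c * (1 - y)) / gser (c * (1 - y))) \<le> a * (g1 (c * (1 - x)) / gser (c * (1 - x)))"
      using a0 by (intro mult_left_mono) auto
    thus "mu - a * (g1 (c * (1 - x)) / gser (c * (1 - x))) \<le> mu - a * (g1 (c * (1 - y)) / gser (c * (1 - y)))"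
      by linarith
  qed
  have root: "f_prop mu a lam H = mu * H \<longleftrightarrow> gser (c * (1 - H)) = 1/a" for H
  proof -
    have "f_prop mu a lam H = mu * H \<longleftrightarrow> ln (a * gser (c * (1 - H))) = 0"
      unfolding feq using assms by simp
    also have "\<dots> \<longleftrightarrow> a * gser (c * (1 - H)) = 1" using agpos by simp
    also have "\<dots> \<longleftrightarrow> gser (c * (1 - H)) = 1/a" using a0 by (auto simp: field_simps)
    finally show ?thesis .
  qed
  note GR = gser_root[OF assms(1)]
  have P4: "\<exists>!H. f_prop mu a lam H = mu * H"
  proof -
    obtain v where v: "gser v = 1/a" using GR by blast
    have "f_prop mu a lam (1 - v / c) = mu * (1 - v / c)"
      unfolding root using v c0 by simp
    moreover have "H = 1 - v / c" if "f_prop mu a lam H = mu * H" for H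
    proof -
      have "gser (c * (1 - H)) = 1/a" using that root by simp
      hence "c * (1 - H) = v" using GR v by blast
      thus ?thesis using c0 by (auto simp: field_simps)
    qed
    ultimately show ?thesis by blast
  qed
  have P5: "\<forall>H. f_prop mu a lam H = mu * H \<longrightarrow> 1 < H \<and> H < 1 + lam"
  proof (intro allI impI)
    fix H assume "f_prop mu a lam H = mu * H"
    hence "gser (c * (1 - H)) = 1/a" using root by simp
    hence r: "-a < c * (1 - H)" "c * (1 - H) < 0" using GR by auto
    from r(2) c0 have "1 < H" by (simp add: mult_less_0_iff)
    moreover have "H < 1 + lam"
    proof -
      have "-a < (a / lam) * (1 - H)" using r(1) by (simp add: c_def)
      hence "-a * lam < a * (1 - H)" using assms by (simp add: field_simps)
      hence "a * (-lam) < a * (1 - H)" by simp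
      hence "-lam < 1 - H" using a0 by (simp only: mult_less_cancel_left_pos)
      thus ?thesis by simp
    qed
    ultimately show "1 < H \<and> H < 1 + lam" by simp
  qed
  show ?thesis using P1 P2 P3 P4 P5 by blast
qed

end
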